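(* Let $c>0$ and $\gamma>0$, and define the hybrid ordinary-Cauchy (HOC) function $l_{\gamma,c}:\mathbb{R}\to\mathbb{R}$ by $$l_{\gamma,c}(x)=\begin{cases} x^2/2, & |x|\le c,\\ \frac{\gamma^2+c^2}{2}\ln\!\big(1+(x/\gamma)^2\big)+b, & |x|>c,\end{cases}\qquad b=\frac{c^2}{2}-\frac{\gamma^2+c^2}{2}\ln\!\big(1+(c/\gamma)^2\big).$$ Define the (extended-real-valued) implicit regularizer $\varphi_{\gamma,c}(y)=\sup_{t\in\mathbb{R}}\big[l_{\gamma,c}(t)-\tfrac{(t-y)^2}{2}\big]$. Then for every $x\in\mathbb{R}$, $$l_{\gamma,c}(x)=\min_{y\in\mathbb{R}}\ \frac{(x-y)^2}{2}+\varphi_{\gamma,c}(y),$$ and this minimum is attained uniquely at $$y^\star=\max\Big\{0,\ |x|-\frac{(\gamma^2+c^2)|x|}{\gamma^2+x^2}\Big\}\cdot\operatorname{sign}(x).$$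
   Context: $\operatorname{sign}(x)$ denotes the sign of $x$ (with $\operatorname{sign}(0)=0$). *)

theory Defs
  imports Complex_Main "HOL-Library.Extended_Real"
begin

definition hoc_b :: "real \<Rightarrow> real \<Rightarrow> real" where
  "hoc_b \<gamma> c = c^2 / 2 - (\<gamma>^2 + c^2) / 2 * ln (1 + (c / \<gamma>)^2)"

definition hoc :: "real \<Rightarrow> real \<Rightarrow> real \<Rightarrow> real" where
  "hoc \<gamma> c x = (if \<bar>x\<bar> \<le> c then x^2 / 2
     else (\<gamma>^2 + c^2) / 2 * ln (1 + (x / \<gamma>)^2) + hoc_b \<gamma> c)"

definition hoc_phi :: "real \<Rightarrow> real \<Rightarrow> real \<Rightarrow> ereal" where
  "hoc_phi \<gamma> c y = (SUP t::real. ereal (hoc \<gamma> c t - (t - y)^2 / 2))"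

end

theory Submission
  imports Defs
begin

definition FF :: "real \<Rightarrow> real \<Rightarrow> real \<Rightarrow> real" where
  "FF \<gamma> c s = s^2/2 - (\<gamma>^2 + c^2) / 2 * ln (1 + (s / \<gamma>)^2) - hoc_b \<gamma> c"
definition D0 :: "real \<Rightarrow> real \<Rightarrow> real \<Rightarrow> real" where
  "D0 \<gamma> c s = s * (s^2 - c^2) / (\<gamma>^2 + s^2)"
definition DD :: "real \<Rightarrow> real \<Rightarrow> real \<Rightarrow> real" where
  "DD \<gamma> c s = (if \<bar>s\<bar> \<le> c then 0 else D0 \<gamma> c s)"
definition HH :: "real \<Rightarrow> real \<Rightarrow> real \<Rightarrow> real" where
  "HH \<gamma> c t = t^2/2 - hoc \<gamma> c t"

lemma HH_eq: "HH \<gamma> c t = (if \<bar>t\<bar> \<le> c then 0 else FF \<gamma> c t)"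
  by (simp add: HH_def hoc_def FF_def)

lemma FF_c: "FF \<gamma> c c = 0" "FF \<gamma> c (-c) = 0"
  by (simp_all add: FF_def hoc_b_def)

lemma FF_deriv:
  fixes s \<gamma> c :: real
  assumes g: "\<gamma> > 0"
  shows "DERIV (FF \<gamma> c) s :> D0 \<gamma> c s"
proof -
  have p: "1 + (s/\<gamma>)^2 > 0" by (smt (verit) zero_le_power2)
  have q: "\<gamma>^2 + s^2 > 0" using g by (simp add: add_pos_nonneg)
  have e: "1 + (s/\<gamma>)^2 = (\<gamma>^2 + s^2) / \<gamma>^2" using g by (simp add: power_divide add_divide_distrib)
  have d: "DERIV (\<lambda>s. s^2/2 - (\<gamma>^2 + c^2) / 2 * ln (1 + (s / \<gamma>)^2) - hoc_b \<gamma> c) s :> 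
     (2 * s / 2 - (\<gamma>^2 + c^2) / 2 * ((2 * (s/\<gamma>) * (1/\<gamma>)) / (1 + (s/\<gamma>)^2)))"
    using p g by (auto intro!: derivative_eq_intros) (simp add: divide_simps; simp add: algebra_simps)
  have e2: "(2 * (s/\<gamma>) * (1/\<gamma>)) / (1 + (s/\<gamma>)^2) = 2 * s / (\<gamma>^2 + s^2)"
    unfolding e using g q by (simp add: power2_eq_square)
  have e3: "2 * s / 2 - (\<gamma>^2 + c^2) / 2 * (2 * s / (\<gamma>^2 + s^2)) = s * (s^2 - c^2) / (\<gamma>^2 + s^2)"
    using q by (simp add: divide_simps) (simp add: algebra_simps power2_eq_square)
  show ?thesis using d unfolding e2 e3 FF_def[abs_def] D0_def .
qed

lemma D0_c: "D0 \<gamma> c c = 0" "D0 \<gamma> c (-c) = 0" by (simp_all add: D0_def)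

lemma HH_deriv:
  fixes \<gamma> c x :: real
  assumes c: "c > 0" and g: "\<gamma> > 0"
  shows "DERIV (HH \<gamma> c) x :> DD \<gamma> c x"
proof -
  consider "\<bar>x\<bar> < c" | "\<bar>x\<bar> > c" | "x = c" | "x = -c" by linarith
  then show ?thesis
  proof cases
    case 1
    have ev: "eventually (\<lambda>t. t \<in> {-c<..<c}) (nhds x)"
      using 1 by (intro eventually_nhds_in_open) auto
    have "eventually (\<lambda>t. HH \<gamma> c t = 0) (nhds x)"
      using ev by eventually_elim (auto simp: HH_eq)
    then have "DERIV (HH \<gamma> c) x :> 0 \<longleftrightarrow> DERIV (\<lambda>_. 0::real) x :> 0"
      by (intro DERIV_cong_ev) auto
    then show ?thesis using 1 by (auto simp: DD_def abs_if)
  next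
    case 2
    have ev: "eventually (\<lambda>t. t \<in> {..< -c} \<union> {c<..}) (nhds x)"
      using 2 by (intro eventually_nhds_in_open) auto
    have "eventually (\<lambda>t. HH \<gamma> c t = FF \<gamma> c t) (nhds x)"
      using ev by eventually_elim (use c in \<open>auto simp: HH_eq\<close>)
    then have "DERIV (HH \<gamma> c) x :> D0 \<gamma> c x \<longleftrightarrow> DERIV (FF \<gamma> c) x :> D0 \<gamma> c x"
      by (intro DERIV_cong_ev) auto
    then show ?thesis using 2 FF_deriv[OF g] by (auto simp: DD_def abs_if)
  next
    case 3
    have cp: "-c < x" "x < x+1" using 3 c by auto
    have F: "((\<lambda>y. (FF \<gamma> c y - FF \<gamma> c x) / (y - x)) \<longlongrightarrow> 0) (at x)"
      using FF_deriv[OF g, of c c] 3 D0_c by (simp add: has_field_derivative_iff)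
    have L: "((\<lambda>y. (HH \<gamma> c y - HH \<gamma> c x) / (y - x)) \<longlongrightarrow> 0) (at_left x)"
    proof (rule tendsto_eventually)
      show "eventually (\<lambda>y. (HH \<gamma> c y - HH \<gamma> c x) / (y - x) = 0) (at_left x)"
        using eventually_at_left_real[of "-c" x, OF cp(1)]
        by eventually_elim (use 3 c in \<open>auto simp: HH_eq\<close>)
    qed
    have R: "((\<lambda>y. (HH \<gamma> c y - HH \<gamma> c x) / (y - x)) \<longlongrightarrow> 0) (at_right x)"
    proof (rule Lim_transform_eventually)
      show "((\<lambda>y. (FF \<gamma> c y - FF \<gamma> c x) / (y - x)) \<longlongrightarrow> 0) (at_right x)"
        using F by (simp add: filterlim_at_split)
      show "eventually (\<lambda>y. (FF \<gamma> c y - FF \<gamma> c x) / (y - x) = (HH \<gamma> c y - HH \<gamma> c x) / (y - x)) (at_right x)"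
        using eventually_at_right_real[of x "x+1", OF cp(2)]
        by eventually_elim (use 3 c in \<open>auto simp: HH_eq FF_c\<close>)
    qed
    have "((\<lambda>y. (HH \<gamma> c y - HH \<gamma> c x) / (y - x)) \<longlongrightarrow> 0) (at x)"
      using L R by (simp add: filterlim_at_split)
    then show ?thesis using 3 c by (simp add: has_field_derivative_iff DD_def)
  next
    case 4
    have cp: "x < c" "x - 1 < x" using 4 c by auto
    have F: "((\<lambda>y. (FF \<gamma> c y - FF \<gamma> c x) / (y - x)) \<longlongrightarrow> 0) (at x)"
      using FF_deriv[OF g, of c "-c"] 4 D0_c by (simp add: has_field_derivative_iff)
    have R: "((\<lambda>y. (HH \<gamma> c y - HH \<gamma> c x) / (y - x)) \<longlongrightarrow> 0) (at_right x)"
    proof (rule tendsto_eventually)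
      show "eventually (\<lambda>y. (HH \<gamma> c y - HH \<gamma> c x) / (y - x) = 0) (at_right x)"
        using eventually_at_right_real[of x c, OF cp(1)]
        by eventually_elim (use 4 c in \<open>auto simp: HH_eq\<close>)
    qed
    have L: "((\<lambda>y. (HH \<gamma> c y - HH \<gamma> c x) / (y - x)) \<longlongrightarrow> 0) (at_left x)"
    proof (rule Lim_transform_eventually)
      show "((\<lambda>y. (FF \<gamma> c y - FF \<gamma> c x) / (y - x)) \<longlongrightarrow> 0) (at_left x)"
        using F by (simp add: filterlim_at_split)
      show "eventually (\<lambda>y. (FF \<gamma> c y - FF \<gamma> c x) / (y - x) = (HH \<gamma> c y - HH \<gamma> c x) / (y - x)) (at_left x)"
        using eventually_at_left_real[of "x-1" x, OF cp(2)]
        by eventually_elim (use 4 c in \<open>auto simp: HH_eq FF_c\<close>)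
    qed
    have "((\<lambda>y. (HH \<gamma> c y - HH \<gamma> c x) / (y - x)) \<longlongrightarrow> 0) (at x)"
      using L R by (simp add: filterlim_at_split)
    then show ?thesis using 4 c by (simp add: has_field_derivative_iff DD_def)
  qed
qed


lemma D0_mono:
  fixes \<gamma> c s t :: real
  assumes c: "0 < c" and g: "0 < \<gamma>" and cs: "c \<le> s" and st: "s \<le> t"
  shows "D0 \<gamma> c s \<le> D0 \<gamma> c t"
proof -
  define P where "P = (\<gamma>^2 + s^2) * (\<gamma>^2 + t^2)"
  have Ps: "\<gamma>^2 + s^2 > 0" "\<gamma>^2 + t^2 > 0" using g by (simp_all add: add_pos_nonneg)
  have P: "P > 0" unfolding P_def using Ps by simp
  have cc: "c*c \<le> s*t" using c cs st by (intro mult_mono) auto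
  have A: "(\<gamma>^2 + c^2) * (\<gamma>^2 - s*t) \<le> (\<gamma>^2 + c^2) * (\<gamma>^2 - c*c)"
    using cc by (intro mult_left_mono) auto
  have B: "(\<gamma>^2 + c^2) * (\<gamma>^2 - c*c) \<le> P"
  proof -
    have sq: "0 \<le> (\<gamma>*s)^2 + (\<gamma>*t)^2 + (s*t)^2 + (c*c)^2" by simp
    then show ?thesis unfolding P_def by (simp add: algebra_simps power2_eq_square)
  qed
  have N: "0 \<le> P + (\<gamma>^2 + c^2) * (s*t - \<gamma>^2)"
    using A B by (simp add: algebra_simps)
  have eq: "D0 \<gamma> c t - D0 \<gamma> c s = (t - s) * (P + (\<gamma>^2 + c^2) * (s*t - \<gamma>^2)) / P"
    unfolding D0_def P_def using Ps g
    by (simp add: divide_simps) (simp add: algebra_simps power2_eq_square)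
  have "0 \<le> (t - s) * (P + (\<gamma>^2 + c^2) * (s*t - \<gamma>^2)) / P"
    using N P st by simp
  then show ?thesis using eq by simp
qed

lemma D0_neg: "D0 \<gamma> c (-s) = - D0 \<gamma> c s" by (simp add: D0_def)

lemma DD_mono:
  fixes \<gamma> c s t :: real
  assumes c: "0 < c" and g: "0 < \<gamma>" and st: "s \<le> t"
  shows "DD \<gamma> c s \<le> DD \<gamma> c t"
proof -
  have pos: "0 \<le> D0 \<gamma> c u" if "c \<le> u" for u
    using D0_mono[OF c g order_refl that] D0_c by simp
  have neg: "D0 \<gamma> c u \<le> 0" if "u \<le> -c" for u
    using pos[of "-u"] that D0_neg[of \<gamma> c u] by simp
  consider "\<bar>s\<bar> \<le> c" "\<bar>t\<bar> \<le> c" | "\<bar>s\<bar> \<le> c" "\<bar>t\<bar> > c" | "\<bar>s\<bar> > c" "\<bar>t\<bar> \<le> c"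
    | "s > c" "t > c" | "s < -c" "t > c" | "s < -c" "t < -c" | "s > c" "t < -c" by linarith
  then show ?thesis
  proof cases
    case 1 then show ?thesis by (auto simp: DD_def abs_if)
  next
    case 2
    have "c < t" using 2 st by (auto simp: abs_if split: if_splits)
    then show ?thesis using 2 pos[of t] by (auto simp: DD_def)
  next
    case 3
    have "s < -c" using 3 st by (auto simp: abs_if split: if_splits)
    then show ?thesis using 3 neg[of s] by (auto simp: DD_def)
  next
    case 4 then show ?thesis using D0_mono[OF c g _ st] by (auto simp: DD_def abs_if)
  next
    case 5 then show ?thesis using pos[of t] neg[of s] by (auto simp: DD_def abs_if)
  next
    case 6 then show ?thesis using D0_mono[OF c g, of "-t" "-s"] st D0_neg[of \<gamma> c s] D0_neg[of \<gamma> c t]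
      by (auto simp: DD_def abs_if)
  next
    case 7 then show ?thesis using st c by linarith
  qed
qed

lemma HH_conv:
  fixes \<gamma> c x t :: real
  assumes c: "0 < c" and g: "0 < \<gamma>"
  shows "HH \<gamma> c x + DD \<gamma> c x * (t - x) \<le> HH \<gamma> c t"
proof -
  have der: "\<And>u. DERIV (HH \<gamma> c) u :> DD \<gamma> c u" using HH_deriv[OF c g] .
  consider "t = x" | "x < t" | "t < x" by linarith
  then show ?thesis
  proof cases
    case 1 then show ?thesis by simp
  next
    case 2
    obtain z where z: "x < z" "z < t" "HH \<gamma> c t - HH \<gamma> c x = (t - x) * DD \<gamma> c z"
      using MVT2[OF 2 der] by blast
    have "DD \<gamma> c x * (t - x) \<le> DD \<gamma> c z * (t - x)"
      using DD_mono[OF c g, of x z] z 2 by (intro mult_right_mono) auto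
    then show ?thesis using z(3) by (simp add: algebra_simps)
  next
    case 3
    obtain z where z: "t < z" "z < x" "HH \<gamma> c x - HH \<gamma> c t = (x - t) * DD \<gamma> c z"
      using MVT2[OF 3 der] by blast
    have "DD \<gamma> c z * (x - t) \<le> DD \<gamma> c x * (x - t)"
      using DD_mono[OF c g, of z x] z 3 by (intro mult_right_mono) auto
    then show ?thesis using z by (simp add: algebra_simps)
  qed
qed

lemma HH_strict:
  fixes \<gamma> c x y :: real
  assumes c: "0 < c" and g: "0 < \<gamma>" and ne: "y \<noteq> DD \<gamma> c x"
  shows "\<exists>t. HH \<gamma> c t < HH \<gamma> c x + y * (t - x)"
proof -
  have lim: "((\<lambda>t. (HH \<gamma> c t - HH \<gamma> c x) / (t - x)) \<longlongrightarrow> DD \<gamma> c x) (at x)"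
    using HH_deriv[OF c g, of x] by (simp add: has_field_derivative_iff)
  then have limL: "((\<lambda>t. (HH \<gamma> c t - HH \<gamma> c x) / (t - x)) \<longlongrightarrow> DD \<gamma> c x) (at_left x)"
    and limR: "((\<lambda>t. (HH \<gamma> c t - HH \<gamma> c x) / (t - x)) \<longlongrightarrow> DD \<gamma> c x) (at_right x)"
    by (simp_all add: filterlim_at_split)
  consider "DD \<gamma> c x < y" | "y < DD \<gamma> c x" using ne by linarith
  then show ?thesis
  proof cases
    case 1
    have "eventually (\<lambda>t. (HH \<gamma> c t - HH \<gamma> c x) / (t - x) < y) (at_right x)"
      using order_tendstoD(2)[OF limR 1] .
    then obtain b where b: "b > x" "\<And>t. t > x \<Longrightarrow> t < b \<Longrightarrow> (HH \<gamma> c t - HH \<gamma> c x) / (t - x) < y"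
      unfolding eventually_at_right_field by blast
    define t where "t = (x + b) / 2"
    have t: "x < t" "t < b" using b unfolding t_def by auto
    have "(HH \<gamma> c t - HH \<gamma> c x) / (t - x) < y" using b t by blast
    then have "HH \<gamma> c t - HH \<gamma> c x < y * (t - x)" using t by (simp add: pos_divide_less_eq)
    then show ?thesis by (intro exI[of _ t]) simp
  next
    case 2
    have "eventually (\<lambda>t. y < (HH \<gamma> c t - HH \<gamma> c x) / (t - x)) (at_left x)"
      using order_tendstoD(1)[OF limL 2] .
    then obtain b where b: "b < x" "\<And>t. t > b \<Longrightarrow> t < x \<Longrightarrow> y < (HH \<gamma> c t - HH \<gamma> c x) / (t - x)"
      unfolding eventually_at_left_field by blast
    define t where "t = (x + b) / 2"
    have t: "b < t" "t < x" using b unfolding t_def by auto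
    have "y < (HH \<gamma> c t - HH \<gamma> c x) / (t - x)" using b t by blast
    then have "HH \<gamma> c t - HH \<gamma> c x < y * (t - x)" using t by (simp add: neg_less_divide_eq)
    then show ?thesis by (intro exI[of _ t]) simp
  qed
qed

lemma ystar_eq:
  fixes \<gamma> c x :: real
  assumes c: "0 < c" and g: "0 < \<gamma>"
  shows "max 0 (\<bar>x\<bar> - (\<gamma>^2 + c^2) * \<bar>x\<bar> / (\<gamma>^2 + x^2)) * sgn x = DD \<gamma> c x"
proof -
  have q: "\<gamma>^2 + x^2 > 0" using g by (simp add: add_pos_nonneg)
  have k: "\<bar>x\<bar> - (\<gamma>^2 + c^2) * \<bar>x\<bar> / (\<gamma>^2 + x^2) = \<bar>x\<bar> * (x^2 - c^2) / (\<gamma>^2 + x^2)"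
    using q by (simp add: divide_simps) (simp add: algebra_simps)
  show ?thesis
  proof (cases "\<bar>x\<bar> \<le> c")
    case True
    have "\<bar>x\<bar>^2 \<le> c^2" using True by (intro power_mono) auto
    then have "x^2 - c^2 \<le> 0" by simp
    then have "\<bar>x\<bar> * (x^2 - c^2) / (\<gamma>^2 + x^2) \<le> 0"
      using q by (intro divide_nonpos_pos mult_nonneg_nonpos) auto
    then show ?thesis using True k by (auto simp: DD_def abs_if)
  next
    case False
    have "c^2 < \<bar>x\<bar>^2" using False c by (intro power_strict_mono) auto
    then have "x^2 - c^2 > 0" by simp
    then have pos: "\<bar>x\<bar> * (x^2 - c^2) / (\<gamma>^2 + x^2) > 0"
      using q False c by (intro divide_pos_pos mult_pos_pos) auto
    have "\<bar>x\<bar> * (x^2 - c^2) / (\<gamma>^2 + x^2) * sgn x = D0 \<gamma> c x"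
      unfolding D0_def by (cases "x \<ge> 0") (auto simp: sgn_if)
    then show ?thesis using False k pos by (simp add: DD_def)
  qed
qed

lemma g_eq: "hoc \<gamma> c t - (t - y)^2 / 2 = t * y - y^2/2 - HH \<gamma> c t"
  by (simp add: HH_def power2_eq_square) (simp add: field_simps)

theorem mainTheorem2:
  fixes \<gamma> c x :: real
  assumes "c > 0" and "\<gamma> > 0"
  defines "ystar \<equiv> max 0 (\<bar>x\<bar> - (\<gamma>^2 + c^2) * \<bar>x\<bar> / (\<gamma>^2 + x^2)) * sgn x"
  shows "ereal (hoc \<gamma> c x) = ereal ((x - ystar)^2 / 2) + hoc_phi \<gamma> c ystar
     \<and> (\<forall>y. y \<noteq> ystar \<longrightarrow> ereal (hoc \<gamma> c x) < ereal ((x - y)^2 / 2) + hoc_phi \<gamma> c y)"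
proof
  have ys: "ystar = DD \<gamma> c x" unfolding ystar_def using ystar_eq[OF assms(1,2)] .
  have split: "ereal ((x - y)^2 / 2) + ereal (hoc \<gamma> c x - (x - y)^2 / 2) = ereal (hoc \<gamma> c x)" for y
    by simp
  have le: "hoc \<gamma> c t - (t - ystar)^2 / 2 \<le> hoc \<gamma> c x - (x - ystar)^2 / 2" for t
    using HH_conv[OF assms(1,2), of x t] unfolding g_eq ys by (simp add: algebra_simps)
  have "hoc_phi \<gamma> c ystar = ereal (hoc \<gamma> c x - (x - ystar)^2 / 2)"
    unfolding hoc_phi_def
  proof (rule antisym)
    show "(SUP t. ereal (hoc \<gamma> c t - (t - ystar)\<^sup>2 / 2)) \<le> ereal (hoc \<gamma> c x - (x - ystar)\<^sup>2 / 2)"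
      by (rule SUP_least) (use le in simp)
    show "ereal (hoc \<gamma> c x - (x - ystar)\<^sup>2 / 2) \<le> (SUP t. ereal (hoc \<gamma> c t - (t - ystar)\<^sup>2 / 2))"
      by (rule SUP_upper) simp
  qed
  then show "ereal (hoc \<gamma> c x) = ereal ((x - ystar)^2 / 2) + hoc_phi \<gamma> c ystar"
    by simp
  show "\<forall>y. y \<noteq> ystar \<longrightarrow> ereal (hoc \<gamma> c x) < ereal ((x - y)^2 / 2) + hoc_phi \<gamma> c y"
  proof (intro allI impI)
    fix y assume "y \<noteq> ystar"
    then obtain t where t: "HH \<gamma> c t < HH \<gamma> c x + y * (t - x)"
      using HH_strict[OF assms(1,2), of y x] ys by blast
    have lt: "hoc \<gamma> c x - (x - y)^2 / 2 < hoc \<gamma> c t - (t - y)^2 / 2"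
      using t unfolding g_eq by (simp add: algebra_simps)
    have A: "ereal (hoc \<gamma> c t - (t - y)^2 / 2) \<le> hoc_phi \<gamma> c y"
      unfolding hoc_phi_def by (rule SUP_upper) simp
    have B: "ereal (hoc \<gamma> c x - (x - y)^2 / 2) < ereal (hoc \<gamma> c t - (t - y)^2 / 2)"
      using lt by simp
    have "ereal (hoc \<gamma> c x - (x - y)^2 / 2) < hoc_phi \<gamma> c y"
      by (rule order_less_le_trans[OF B A])
    then have "ereal ((x - y)^2 / 2) + ereal (hoc \<gamma> c x - (x - y)^2 / 2) < ereal ((x - y)^2 / 2) + hoc_phi \<gamma> c y"
      by (intro ereal_less_add) simp_all
    then show "ereal (hoc \<gamma> c x) < ereal ((x - y)^2 / 2) + hoc_phi \<gamma> c y"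
      by (simp only: split)
  qed
qed

end
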